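(* Let $A$ be a unital $C^*$-algebra, $N\ge2$, and let $P\in M_{N-1}(A)$ be a submagic matrix. The following are equivalent: (1) $P$ can be completed to a magic matrix $\widetilde P\in M_N(A)$ (i.e. one whose upper-left $(N-1)\times(N-1)$ block is $P$); (2) the elements $P_{iN}=1-\sum_{j=1}^{N-1}P_{ij}$, $i=1,\ldots,N-1$, are pairwise orthogonal projections; (3) the elements $P_{Nj}=1-\sum_{i=1}^{N-1}P_{ij}$, $j=1,\ldots,N-1$, are pairwise orthogonal projections; (4) the element $P_{NN}=\sum_{i,j=1}^{N-1}P_{ij}-(N-2)1$ is a projection.
   Context: A submagic matrix over $A$ is a square matrix whose entries are orthogonal projections ($p=p^2=p^*$), pairwise orthogonal within each row and within each column. It is magic if in addition the entries in each row and in each column sum to $1$. *)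

theory Defs
  imports "HOL-Analysis.Analysis"
begin

text \<open>The library has no complex-algebra class,
  so complex scalar multiplication is an extra operation compatible with the real one.\<close>

class unital_cstar_algebra = real_normed_algebra_1 + banach +
  fixes scaleC :: "complex \<Rightarrow> 'a \<Rightarrow> 'a"
    and star :: "'a \<Rightarrow> 'a"
  assumes scaleC_of_real: "scaleC (of_real r) x = scaleR r x"
    and scaleC_add_left: "scaleC (a + b) x = scaleC a x + scaleC b x"
    and scaleC_add_right: "scaleC a (x + y) = scaleC a x + scaleC a y"
    and scaleC_scaleC: "scaleC a (scaleC b x) = scaleC (a * b) x"
    and scaleC_mult_left: "scaleC a x * y = scaleC a (x * y)"
    and scaleC_mult_right: "x * scaleC a y = scaleC a (x * y)"
    and norm_scaleC: "norm (scaleC a x) = cmod a * norm x"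
    and star_star: "star (star x) = x"
    and star_add: "star (x + y) = star x + star y"
    and star_mult: "star (x * y) = star y * star x"
    and star_scaleC: "star (scaleC a x) = scaleC (cnj a) (star x)"
    and cstar_identity: "norm (star x * x) = (norm x)\<^sup>2"

definition projection :: "'a::unital_cstar_algebra \<Rightarrow> bool" where
  "projection p \<longleftrightarrow> p * p = p \<and> star p = p"

text \<open>Matrices in M_n(A) are functions nat => nat => A, indexed by {1..n}.\<close>

definition submagic :: "nat \<Rightarrow> (nat \<Rightarrow> nat \<Rightarrow> 'a::unital_cstar_algebra) \<Rightarrow> bool" where
  "submagic n P \<longleftrightarrow>
     (\<forall>i\<in>{1..n}. \<forall>j\<in>{1..n}. projection (P i j)) \<and>
     (\<forall>i\<in>{1..n}. \<forall>j\<in>{1..n}. \<forall>k\<in>{1..n}. j \<noteq> k \<longrightarrow> P i j * P i k = 0) \<and>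
     (\<forall>j\<in>{1..n}. \<forall>i\<in>{1..n}. \<forall>k\<in>{1..n}. i \<noteq> k \<longrightarrow> P i j * P k j = 0)"

definition magic :: "nat \<Rightarrow> (nat \<Rightarrow> nat \<Rightarrow> 'a::unital_cstar_algebra) \<Rightarrow> bool" where
  "magic n P \<longleftrightarrow> submagic n P \<and>
     (\<forall>i\<in>{1..n}. (\<Sum>j=1..n. P i j) = 1) \<and>
     (\<forall>j\<in>{1..n}. (\<Sum>i=1..n. P i j) = 1)"

end

theory Submission
  imports Defs
begin

lemma star_zero: "star (0::'a::unital_cstar_algebra) = 0"
  by (metis add_cancel_right_right add_0 star_add)
lemma star_one: "star (1::'a::unital_cstar_algebra) = 1"
  by (metis mult_1_right star_mult star_star)
lemma star_minus: "star (- x::'a::unital_cstar_algebra) = - star x"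
  by (metis add_eq_0_iff2 star_add star_zero add.right_inverse)
lemma star_diff: "star (x - y::'a::unital_cstar_algebra) = star x - star y"
  using star_add[of x "- y"] star_minus[of y] by simp
lemma star_sum: "star (sum (f::_\<Rightarrow>'a::unital_cstar_algebra) A) = sum (\<lambda>i. star (f i)) A"
  by (induction A rule: infinite_finite_induct) (auto simp: star_zero star_add)
lemma star_scaleR: "star (scaleR r (x::'a::unital_cstar_algebra)) = scaleR r (star x)"
  by (metis scaleC_of_real star_scaleC complex_cnj_complex_of_real)
lemma star_of_nat: "star (of_nat n::'a::unital_cstar_algebra) = of_nat n"
  by (induction n) (auto simp: star_zero star_one star_add)
lemma scaleC_zero_left: "scaleC 0 (x::'a::unital_cstar_algebra) = 0"
  by (metis scaleC_of_real of_real_0 scaleR_zero_left)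
lemma scaleC_one: "scaleC 1 (x::'a::unital_cstar_algebra) = x"
  by (metis scaleC_of_real of_real_1 scaleR_one)

lemma proj_norm_le1: assumes "projection (p::'a::unital_cstar_algebra)" shows "norm p \<le> 1"
proof -
  have "(norm p)^2 = norm p" using cstar_identity[of p] assms by (simp add: projection_def)
  then have "norm p * (norm p - 1) = 0" by (simp add: power2_eq_square algebra_simps)
  then show ?thesis by auto
qed

lemma proj_compl: assumes "projection (q::'a::unital_cstar_algebra)" shows "projection (1 - q)"
  using assms by (simp add: projection_def algebra_simps star_diff star_one)

lemma lemmaB:
  fixes p q :: "'a::unital_cstar_algebra"
  assumes p: "projection p" and q: "projection q" and s: "0 \<le> s" "s \<le> 1"
  shows "norm (p - s *\<^sub>R (p * q * p)) \<le> 1"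
proof -
  have pp: "p * p = p" "star p = p" using p by (auto simp: projection_def)
  have e: "p - s *\<^sub>R (p * q * p) = (1 - s) *\<^sub>R p + s *\<^sub>R (p * (1 - q) * p)"
    using pp by (simp add: algebra_simps)
  have st: "star ((1 - q) * p) * ((1 - q) * p) = p * (1 - q) * p"
    using proj_compl[OF q] pp by (simp add: star_mult projection_def mult.assoc)
       (metis mult.assoc)
  have n1: "norm ((1 - q) * p) \<le> 1"
    using norm_mult_ineq[of "1 - q" p] proj_norm_le1[OF proj_compl[OF q]] proj_norm_le1[OF p]
    by (meson mult_le_one norm_ge_zero order_trans)
  have "norm (p * (1 - q) * p) = (norm ((1 - q) * p))^2"
    using cstar_identity[of "(1 - q) * p"] st by simp
  also have "\<dots> \<le> 1" using n1 by (simp add: power_le_one)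
  finally have n2: "norm (p * (1 - q) * p) \<le> 1" .
  have "norm (p - s *\<^sub>R (p * q * p)) \<le> (1 - s) * norm p + s * norm (p * (1 - q) * p)"
    unfolding e using norm_triangle_ineq[of "(1 - s) *\<^sub>R p" "s *\<^sub>R (p * (1 - q) * p)"] s by simp
  also have "\<dots> \<le> (1 - s) * 1 + s * 1"
    using s proj_norm_le1[OF p] n2 by (intro add_mono mult_left_mono) auto
  finally show ?thesis by simp
qed

lemma conv_help: fixes x y :: "'a::real_vector"
  shows "(1 - c) *\<^sub>R x + c *\<^sub>R (x + d *\<^sub>R y) = x + (c*d) *\<^sub>R y"
  by (simp add: scaleR_add_right scaleR_diff_left)
lemma mid_help: fixes x y z :: "'a::real_vector"
  shows "(1/2) *\<^sub>R (x + (2 * s) *\<^sub>R y) + (1/2) *\<^sub>R (x + (2*t) *\<^sub>R z) = x + s *\<^sub>R y + t *\<^sub>R z"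
proof -
  have "(1/2) *\<^sub>R (x + (2 * s) *\<^sub>R y) + (1/2) *\<^sub>R (x + (2*t) *\<^sub>R z) = ((1/2) *\<^sub>R x + (1/2) *\<^sub>R x) + s *\<^sub>R y + t *\<^sub>R z"
    by (simp add: scaleR_add_right)
  also have "(1/2) *\<^sub>R x + (1/2) *\<^sub>R x = x" by (simp flip: scaleR_add_left)
  finally show ?thesis .
qed
lemma two_help: fixes x :: "'a::real_vector" shows "(2*c) *\<^sub>R x = c *\<^sub>R x + c *\<^sub>R x"
  by (metis scaleR_2 scaleR_scaleR)

lemma scaleC_minus_left: "scaleC (- u) (x::'a::unital_cstar_algebra) = - scaleC u x"
proof -
  have "scaleC (- u) x + scaleC u x = 0" by (simp flip: scaleC_add_left add: scaleC_zero_left)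
  then show ?thesis by (simp add: eq_neg_iff_add_eq_0)
qed
lemma scaleC_2: "scaleC (2 * m) (x::'a::unital_cstar_algebra) = 2 *\<^sub>R scaleC m x"
proof -
  have "scaleC (2 * m) x = scaleC (complex_of_real 2) (scaleC m x)" by (simp add: scaleC_scaleC)
  then show ?thesis by (metis scaleC_of_real)
qed

lemma norm_comb:
  fixes x y :: "'a::real_normed_vector"
  assumes "0 \<le> \<alpha>" "0 \<le> \<beta>"
  shows "norm (\<alpha> *\<^sub>R x + \<beta> *\<^sub>R y) \<le> \<alpha> * norm x + \<beta> * norm y"
proof -
  have "norm (\<alpha> *\<^sub>R x + \<beta> *\<^sub>R y) \<le> norm (\<alpha> *\<^sub>R x) + norm (\<beta> *\<^sub>R y)" by (rule norm_triangle_ineq)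
  then show ?thesis using assms by simp
qed

lemma sq_lemma:
  fixes p a :: "'a::unital_cstar_algebra"
  assumes "p * p = p" "p * a = a" "a * p = a"
  shows "(p + scaleC m a) * (p + scaleC n a) = p + scaleC (m + n) a + scaleC (m * n) (a * a)"
  using assms by (simp add: distrib_left distrib_right scaleC_mult_left scaleC_mult_right scaleC_scaleC scaleC_add_left scaleC_add_right mult.commute add.assoc)

lemma lemmaH:
  fixes p a :: "'a::unital_cstar_algebra"
  assumes p: "projection p" and sa: "star a = a" and pa: "p * a = a" and ap: "a * p = a"
    and S: "S > 0" and n1: "norm (p + S *\<^sub>R a) \<le> 1" and n2: "norm (p - S *\<^sub>R a) \<le> 1"
  shows "a = 0"
proof -
  have pp: "p * p = p" "star p = p" using p by (auto simp: projection_def)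
  have np: "norm p \<le> 1" using proj_norm_le1[OF p] .
  have H1: "norm (p + t *\<^sub>R a) \<le> 1" if t: "\<bar>t\<bar> \<le> S" for t
  proof -
    have e: "p + t *\<^sub>R a = ((S + t) / (2*S)) *\<^sub>R (p + S *\<^sub>R a) + ((S - t) / (2*S)) *\<^sub>R (p - S *\<^sub>R a)"
    proof -
      have c1: "(S + t)/(2*S) + (S - t)/(2*S) = 1" and c2: "(S+t)/(2*S)*S - (S-t)/(2*S)*S = t"
        using S by (auto simp: field_simps)
      have "((S + t) / (2*S)) *\<^sub>R (p + S *\<^sub>R a) + ((S - t) / (2*S)) *\<^sub>R (p - S *\<^sub>R a)
          = ((S + t)/(2*S) + (S - t)/(2*S)) *\<^sub>R p + ((S+t)/(2*S)*S - (S-t)/(2*S)*S) *\<^sub>R a"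
        by (simp add: scaleR_add_right scaleR_diff_right scaleR_add_left scaleR_diff_left)
      then show ?thesis using c1 c2 by simp
    qed
    have "norm (p + t *\<^sub>R a) \<le> ((S + t) / (2*S)) * norm (p + S *\<^sub>R a) + ((S - t) / (2*S)) * norm (p - S *\<^sub>R a)"
      unfolding e using t S by (intro norm_comb) auto
    also have "\<dots> \<le> ((S + t) / (2*S)) * 1 + ((S - t) / (2*S)) * 1"
      using t S n1 n2 by (intro add_mono mult_left_mono) auto
    also have "\<dots> = 1" using S by (simp add: field_simps)
    finally show ?thesis .
  qed
  have H2: "norm (p + (S*S) *\<^sub>R (a * a)) \<le> 1"
  proof -
    have ee: "(p + S *\<^sub>R a) * (p + S *\<^sub>R a) + (p - S *\<^sub>R a) * (p - S *\<^sub>R a) = 2 *\<^sub>R (p + (S*S) *\<^sub>R (a * a))"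
    proof -
      have t: "(S * S) *\<^sub>R (a * a) + (S * S) *\<^sub>R (a * a) = (S * (S * 2)) *\<^sub>R (a * a)"
      proof -
        have "(S * S) *\<^sub>R (a * a) + (S * S) *\<^sub>R (a * a) = (S*S + S*S) *\<^sub>R (a * a)" by (rule scaleR_add_left[symmetric])
        also have "S*S + S*S = S * (S * 2)" by simp
        finally show ?thesis .
      qed
      show ?thesis using pp pa ap by (simp add: algebra_simps scaleR_2 t)
    qed
    have e: "p + (S*S) *\<^sub>R (a * a) = (1/2) *\<^sub>R ((p + S *\<^sub>R a) * (p + S *\<^sub>R a)) + (1/2) *\<^sub>R ((p - S *\<^sub>R a) * (p - S *\<^sub>R a))"
      unfolding scaleR_add_right[symmetric] ee by simp
    have a1: "norm ((p + S *\<^sub>R a) * (p + S *\<^sub>R a)) \<le> 1"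
      by (meson n1 norm_ge_zero norm_mult_ineq mult_le_one order_trans)
    have a2: "norm ((p - S *\<^sub>R a) * (p - S *\<^sub>R a)) \<le> 1"
      by (meson n2 norm_ge_zero norm_mult_ineq mult_le_one order_trans)
    have "norm (p + (S*S) *\<^sub>R (a * a)) \<le> (1/2) * norm ((p + S *\<^sub>R a) * (p + S *\<^sub>R a)) + (1/2) * norm ((p - S *\<^sub>R a) * (p - S *\<^sub>R a))"
      unfolding e by (intro norm_comb) auto
    then show ?thesis using a1 a2 by linarith
  qed
  have H2b: "norm (p + \<sigma> *\<^sub>R (a * a)) \<le> 1" if "0 \<le> \<sigma>" "\<sigma> \<le> S*S" for \<sigma>
  proof -
    define c where "c = \<sigma> / (S*S)"
    have c: "0 \<le> c" "c \<le> 1" "c * (S*S) = \<sigma>" using that S by (auto simp: c_def field_simps)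
    have "p + \<sigma> *\<^sub>R (a * a) = (1 - c) *\<^sub>R p + c *\<^sub>R (p + (S*S) *\<^sub>R (a * a))"
      using conv_help[of c p "S*S" "a*a"] c by simp
    then have "norm (p + \<sigma> *\<^sub>R (a * a)) \<le> (1 - c) * norm p + c * norm (p + (S*S) *\<^sub>R (a * a))"
      using c by (simp add: norm_comb)
    also have "\<dots> \<le> (1 - c) * 1 + c * 1" using c np H2 by (intro add_mono mult_left_mono) auto
    finally show ?thesis by simp
  qed
  have H3: "norm (p + s *\<^sub>R a + t *\<^sub>R (a * a)) \<le> 1" if s: "\<bar>s\<bar> \<le> S/2" and t: "0 \<le> t" "t \<le> S*S/2" for s t
  proof -
    have "norm (p + s *\<^sub>R a + t *\<^sub>R (a * a)) \<le> (1/2) * norm (p + (2 * s) *\<^sub>R a) + (1/2) * norm (p + (2*t) *\<^sub>R (a * a))"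
      unfolding mid_help[of p s a t "a*a", symmetric] by (intro norm_comb) auto
    also have "\<dots> \<le> (1/2) * 1 + (1/2) * 1"
      using H1[of "2 * s"] H2b[of "2*t"] s t by (intro add_mono mult_left_mono) auto
    finally show ?thesis by simp
  qed
  define r where "r = S/4"
  have r: "r > 0" using S by (simp add: r_def)
  have H4: "norm (p + scaleC l a) \<le> 1" if l: "cmod l \<le> r" for l
  proof -
    have st: "star (p + scaleC l a) = p + scaleC (cnj l) a" using pp sa by (simp add: star_add star_scaleC)
    have "star (p + scaleC l a) * (p + scaleC l a) = p + scaleC (cnj l + l) a + scaleC (cnj l * l) (a * a)"
      unfolding st by (rule sq_lemma[OF pp(1) pa ap])
    also have "\<dots> = p + (2 * Re l) *\<^sub>R a + ((cmod l)^2) *\<^sub>R (a * a)"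
    proof -
      have c1: "cnj l + l = complex_of_real (2 * Re l)" using complex_add_cnj[of l] by (simp add: add.commute)
      have c2: "cnj l * l = complex_of_real ((cmod l)^2)" using complex_norm_square[of l] by (simp add: mult.commute)
      show ?thesis unfolding c1 c2 scaleC_of_real by (rule refl)
    qed
    finally have e: "star (p + scaleC l a) * (p + scaleC l a) = p + (2 * Re l) *\<^sub>R a + ((cmod l)^2) *\<^sub>R (a * a)" .
    have "\<bar>2 * Re l\<bar> \<le> S/2" using abs_Re_le_cmod[of l] l r_def by linarith
    moreover have "(cmod l)^2 \<le> S*S/2"
    proof -
      have A: "(cmod l)^2 \<le> r*r" using l power_mono[of "cmod l" r 2] by (simp add: power2_eq_square)
      have B: "r*r*16 = S*S" by (simp add: r_def)
      have C: "0 \<le> r*r" by simp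
      show ?thesis using A B C by linarith
    qed
    ultimately have "norm (star (p + scaleC l a) * (p + scaleC l a)) \<le> 1"
      unfolding e by (intro H3) auto
    then have "(norm (p + scaleC l a))^2 \<le> 1" by (simp add: cstar_identity)
    then show ?thesis using abs_square_le_1[of "norm (p + scaleC l a)"] by simp
  qed
  have H5: "\<forall>m. cmod m \<le> r * sqrt 2 ^ k \<longrightarrow> norm (p + scaleC m a) \<le> 1" for k
  proof (induction k)
    case 0 then show ?case using H4 by simp
  next
    case (Suc k)
    show ?case
    proof (intro allI impI)
      fix m assume m: "cmod m \<le> r * sqrt 2 ^ Suc k"
      define l where "l = m / (1 + \<i>)"
      have c1: "cmod (1 + \<i>) = sqrt 2" by (simp add: cmod_def)
      have nz: "1 + \<i> \<noteq> 0" by (simp add: complex_eq_iff)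
      have ml: "m = (1 + \<i>) * l" using nz by (simp add: l_def)
      have "cmod l = cmod m / sqrt 2" by (simp add: l_def norm_divide c1)
      also have "\<dots> \<le> r * sqrt 2 ^ k" using m by (simp add: field_simps)
      finally have cl: "cmod l \<le> r * sqrt 2 ^ k" .
      have cil: "cmod (\<i> * l) \<le> r * sqrt 2 ^ k" using cl by (simp add: norm_mult)
      have A: "norm ((p + scaleC l a) * (p + scaleC l a)) \<le> 1"
        using Suc cl by (meson norm_ge_zero norm_mult_ineq mult_le_one order_trans)
      have B: "norm ((p + scaleC (\<i>*l) a) * (p + scaleC (\<i>*l) a)) \<le> 1"
        using Suc cil by (meson norm_ge_zero norm_mult_ineq mult_le_one order_trans)
      have s1: "(p + scaleC l a) * (p + scaleC l a) = p + scaleC (l + l) a + scaleC (l*l) (a*a)"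
        by (rule sq_lemma[OF pp(1) pa ap])
      have s2: "(p + scaleC (\<i>*l) a) * (p + scaleC (\<i>*l) a) = p + scaleC (\<i>*l + \<i>*l) a - scaleC (l*l) (a*a)"
      proof -
        have "(\<i>*l) * (\<i>*l) = - (l*l)" by (simp add: algebra_simps)
        then show ?thesis using sq_lemma[OF pp(1) pa ap, of "\<i>*l" "\<i>*l"] by (simp add: scaleC_minus_left)
      qed
      have c: "scaleC (l + l) a + scaleC (\<i>*l + \<i>*l) a = 2 *\<^sub>R scaleC m a"
      proof -
        have "l + l + (\<i>*l + \<i>*l) = 2 * m" by (simp add: ml algebra_simps)
        then show ?thesis by (metis scaleC_add_left scaleC_2)
      qed
      have "(p + scaleC l a) * (p + scaleC l a) + (p + scaleC (\<i>*l) a) * (p + scaleC (\<i>*l) a)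
          = (p + p) + (scaleC (l + l) a + scaleC (\<i>*l + \<i>*l) a)"
        unfolding s1 s2 by (simp add: algebra_simps)
      also have "\<dots> = 2 *\<^sub>R p + 2 *\<^sub>R scaleC m a" using c by (simp add: scaleR_2)
      also have "\<dots> = 2 *\<^sub>R (p + scaleC m a)" by (simp add: scaleR_add_right)
      finally have ee: "(p + scaleC l a) * (p + scaleC l a) + (p + scaleC (\<i>*l) a) * (p + scaleC (\<i>*l) a) = 2 *\<^sub>R (p + scaleC m a)" .
      have e: "p + scaleC m a = (1/2) *\<^sub>R ((p + scaleC l a) * (p + scaleC l a) + (p + scaleC (\<i>*l) a) * (p + scaleC (\<i>*l) a))"
        unfolding ee by simp
      have "norm (p + scaleC m a) \<le> (1/2) * norm ((p + scaleC l a) * (p + scaleC l a)) + (1/2) * norm ((p + scaleC (\<i>*l) a) * (p + scaleC (\<i>*l) a))"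
        unfolding e scaleR_add_right by (intro norm_comb) auto
      then show "norm (p + scaleC m a) \<le> 1" using A B by linarith
    qed
  qed
  show "a = 0"
  proof (rule ccontr)
    assume "a \<noteq> 0"
    then have na: "norm a > 0" by simp
    obtain k where k: "2 / (r * norm a) < sqrt 2 ^ k"
      using real_arch_pow[of "sqrt 2"] by auto
    define m where "m = complex_of_real (r * sqrt 2 ^ k)"
    have cm: "cmod m = r * sqrt 2 ^ k" unfolding m_def norm_of_real using r by simp
    have "norm (scaleC m a) = norm ((p + scaleC m a) - p)" by simp
    also have "\<dots> \<le> norm (p + scaleC m a) + norm p" by (rule norm_triangle_ineq4)
    also have "\<dots> \<le> 2"
    proof -
      have "norm (p + scaleC m a) \<le> 1" using H5[of k] cm by simp
      then show ?thesis using np by linarith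
    qed
    finally have "r * sqrt 2 ^ k * norm a \<le> 2" by (simp add: norm_scaleC cm)
    moreover have "2 < r * norm a * sqrt 2 ^ k" using k r na by (simp add: field_simps)
    ultimately show False by (simp add: algebra_simps)
  qed
qed




lemma orth_sum:
  fixes e :: "'i \<Rightarrow> 'a::unital_cstar_algebra"
  assumes fin: "finite I" and i: "i \<in> I" and ii: "e i * e i = e i"
    and orth: "\<forall>j\<in>I. \<forall>k\<in>I. j \<noteq> k \<longrightarrow> e j * e k = 0"
  shows "e i * sum e I = e i" "sum e I * e i = e i"
proof -
  have "e i * sum e I = (\<Sum>j\<in>I. e i * e j)" by (simp add: sum_distrib_left)
  also have "\<dots> = e i * e i + (\<Sum>j\<in>I - {i}. e i * e j)" using sum.remove[OF fin i] by simp
  also have "(\<Sum>j\<in>I - {i}. e i * e j) = 0" using orth i by (intro sum.neutral) auto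
  finally show "e i * sum e I = e i" using ii by simp
  have "sum e I * e i = (\<Sum>j\<in>I. e j * e i)" by (simp add: sum_distrib_right)
  also have "\<dots> = e i * e i + (\<Sum>j\<in>I - {i}. e j * e i)" using sum.remove[OF fin i] by simp
  also have "(\<Sum>j\<in>I - {i}. e j * e i) = 0" using orth i by (intro sum.neutral) auto
  finally show "sum e I * e i = e i" using ii by simp
qed

lemma sum_proj:
  fixes e :: "'i \<Rightarrow> 'a::unital_cstar_algebra"
  assumes fin: "finite I" and proj: "\<forall>i\<in>I. projection (e i)"
    and orth: "\<forall>j\<in>I. \<forall>k\<in>I. j \<noteq> k \<longrightarrow> e j * e k = 0"
  shows "projection (sum e I)"
proof -
  have "sum e I * sum e I = (\<Sum>i\<in>I. e i * sum e I)" by (simp add: sum_distrib_right)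
  also have "\<dots> = sum e I"
    using orth_sum(1)[OF fin _ _ orth] proj by (intro sum.cong) (auto simp: projection_def)
  finally have 1: "sum e I * sum e I = sum e I" .
  have "star (sum e I) = sum e I" using proj by (simp add: star_sum projection_def)
  then show ?thesis using 1 by (simp add: projection_def)
qed

lemma lemmaA:
  fixes p g :: "'a::unital_cstar_algebra" and f :: "'i \<Rightarrow> 'a"
  assumes p: "projection p" and g: "projection g" and fin: "finite J" and j0: "j0 \<in> J"
    and f: "\<forall>l\<in>J. projection (f l)" and z: "p * (g + sum f J) * p = 0"
  shows "f j0 * p = 0"
proof -
  have pp: "p * p = p" "star p = p" using p by (auto simp: projection_def)
  define b where "b l = p * f l * p" for l
  define a where "a = b j0"
  define c where "c = card (J - {j0})"
  have "card J > 0" using fin j0 card_gt_0_iff by blast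
  then have cJ: "card J = c + 1" using fin j0 by (simp add: c_def)
  have z2: "p * g * p + sum b J = 0"
    using z by (simp add: b_def distrib_left distrib_right sum_distrib_left sum_distrib_right mult.assoc)
  have sb: "sum b J = a + sum b (J - {j0})" using sum.remove[OF fin j0] by (simp add: a_def)
  have pgp: "p * g * p = - (a + sum b (J - {j0}))" using z2 sb by (metis eq_neg_iff_add_eq_0)
  define S where "S = 1 / (real c + 2)"
  have S: "S > 0" "S \<le> 1" "S * (real c + 2) = 1" by (auto simp: S_def)
  have sa: "star a = a" using f j0 pp by (simp add: a_def b_def star_mult projection_def mult.assoc)
  have pa1: "p * a = a" unfolding a_def b_def by (simp add: mult.assoc[symmetric] pp)
  have pa2: "a * p = a" unfolding a_def b_def by (simp add: mult.assoc pp)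
  note pa = pa1 pa2
  have inside: "p + (p - p * g * p) + (\<Sum>l\<in>J - {j0}. p - b l) = (real c + 2) *\<^sub>R p + a"
  proof -
    have "(\<Sum>l\<in>J - {j0}. p - b l) = real c *\<^sub>R p - sum b (J - {j0})"
      by (simp add: sum_subtractf c_def scaleR_conv_of_real)
    moreover have "(real c + 2) *\<^sub>R p = real c *\<^sub>R p + (p + p)" by (simp add: scaleR_add_left scaleR_2)
    ultimately show ?thesis unfolding pgp by (simp add: algebra_simps)
  qed
  have e1: "p + S *\<^sub>R a = S *\<^sub>R (p + (p - p * g * p) + (\<Sum>l\<in>J - {j0}. p - b l))"
    unfolding inside using S by (simp add: scaleR_add_right)
  have nb: "norm (p - b l) \<le> 1" if "l \<in> J" for l
    using lemmaB[OF p, of "f l" 1] f that by (simp add: b_def)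
  have ng: "norm (p - p * g * p) \<le> 1" using lemmaB[OF p g, of 1] by simp
  have np: "norm p \<le> 1" by (rule proj_norm_le1[OF p])
  have "norm (p + (p - p * g * p) + (\<Sum>l\<in>J - {j0}. p - b l)) \<le> norm p + norm (p - p * g * p) + (\<Sum>l\<in>J - {j0}. norm (p - b l))"
  proof -
    have "norm (p + (p - p * g * p) + (\<Sum>l\<in>J - {j0}. p - b l)) \<le> norm (p + (p - p * g * p)) + norm (\<Sum>l\<in>J - {j0}. p - b l)"
      by (rule norm_triangle_ineq)
    also have "\<dots> \<le> (norm p + norm (p - p * g * p)) + (\<Sum>l\<in>J - {j0}. norm (p - b l))"
      by (intro add_mono norm_triangle_ineq norm_sum)
    finally show ?thesis .
  qed
  also have "\<dots> \<le> 1 + 1 + (\<Sum>l\<in>J - {j0}. 1)" using np ng nb by (intro add_mono sum_mono) auto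
  also have "\<dots> = real c + 2" by (simp add: c_def)
  finally have nx: "norm (p + (p - p * g * p) + (\<Sum>l\<in>J - {j0}. p - b l)) \<le> real c + 2" .
  have "S * norm (p + (p - p * g * p) + (\<Sum>l\<in>J - {j0}. p - b l)) \<le> S * (real c + 2)"
    using S nx by (intro mult_left_mono) auto
  then have n1: "norm (p + S *\<^sub>R a) \<le> 1" unfolding e1 using S by simp
  have n2: "norm (p - S *\<^sub>R a) \<le> 1" using lemmaB[OF p _ S(1)[THEN less_imp_le] S(2), of "f j0"] f j0
    by (simp add: a_def b_def)
  have a0: "a = 0" by (rule lemmaH[OF p sa pa(1) pa(2) S(1) n1 n2])
  have "(norm (f j0 * p))^2 = norm (star (f j0 * p) * (f j0 * p))" by (simp add: cstar_identity)
  also have "star (f j0 * p) * (f j0 * p) = a"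
  proof -
    have ff: "f j0 * f j0 = f j0" "star (f j0) = f j0" using f j0 by (auto simp: projection_def)
    have "star (f j0 * p) * (f j0 * p) = (p * f j0) * (f j0 * p)" by (simp add: star_mult pp ff)
    also have "\<dots> = p * (f j0 * f j0) * p" by (simp only: mult.assoc)
    also have "\<dots> = a" by (simp add: ff a_def b_def)
    finally show ?thesis .
  qed
  finally show ?thesis using a0 by simp
qed

lemma KL:
  fixes e :: "'i \<Rightarrow> 'a::unital_cstar_algebra"
  assumes fin: "finite I" and proj: "\<forall>i\<in>I. projection (e i)" and E: "projection (sum e I)"
    and i: "i \<in> I" and k: "k \<in> I" and ik: "i \<noteq> k"
  shows "e i * e k = 0"
proof -
  have pi: "projection (e i)" using proj i by simp
  have s: "sum e I = e i + sum e (I - {i})" using sum.remove[OF fin i] .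
  have "e i * ((1 - sum e I) + sum e (I - {i})) * e i = 0"
    using pi unfolding s by (simp add: projection_def algebra_simps)
  then have "e k * e i = 0"
    using lemmaA[OF pi proj_compl[OF E], of "I - {i}" k e] fin k ik proj by auto
  then have "star (e k * e i) = 0" by (simp add: star_zero)
  then show ?thesis using proj i k by (simp add: star_mult projection_def)
qed

lemma orth_iff:
  fixes e :: "'i \<Rightarrow> 'a::unital_cstar_algebra"
  assumes fin: "finite I" and proj: "\<forall>i\<in>I. projection (e i)"
  shows "(\<forall>i\<in>I. \<forall>k\<in>I. i \<noteq> k \<longrightarrow> e i * e k = 0) \<longleftrightarrow> projection (sum e I)"
  using sum_proj[OF fin proj] KL[OF fin proj] by blast


theorem proposition3p2:
  fixes P :: "nat \<Rightarrow> nat \<Rightarrow> 'a::unital_cstar_algebra" and N :: nat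
  assumes "N \<ge> 2" and "submagic (N - 1) P"
  shows "let
      c1 = (\<exists>Q. magic N Q \<and> (\<forall>i\<in>{1..N-1}. \<forall>j\<in>{1..N-1}. Q i j = P i j));
      r = (\<lambda>i. 1 - (\<Sum>j=1..N-1. P i j));
      c2 = ((\<forall>i\<in>{1..N-1}. projection (r i)) \<and>
            (\<forall>i\<in>{1..N-1}. \<forall>k\<in>{1..N-1}. i \<noteq> k \<longrightarrow> r i * r k = 0));
      c = (\<lambda>j. 1 - (\<Sum>i=1..N-1. P i j));
      c3 = ((\<forall>j\<in>{1..N-1}. projection (c j)) \<and>
            (\<forall>j\<in>{1..N-1}. \<forall>k\<in>{1..N-1}. j \<noteq> k \<longrightarrow> c j * c k = 0));
      c4 = projection ((\<Sum>i=1..N-1. \<Sum>j=1..N-1. P i j) - of_nat (N - 2))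
    in (c1 \<longleftrightarrow> c2) \<and> (c1 \<longleftrightarrow> c3) \<and> (c1 \<longleftrightarrow> c4)"
proof -
  obtain n where N: "N = Suc n" and n1: "n \<ge> 1" using assms(1) by (cases N) auto
  have Nn: "N - 1 = n" "N - 2 = n - 1" using N by auto
  have sub: "submagic n P" using assms(2) Nn by simp
  have Pp: "\<And>i j. i \<in> {1..n} \<Longrightarrow> j \<in> {1..n} \<Longrightarrow> projection (P i j)"
    using sub by (simp add: submagic_def)
  have Prow: "\<forall>j\<in>{1..n}. \<forall>k\<in>{1..n}. j \<noteq> k \<longrightarrow> P i j * P i k = 0" if "i \<in> {1..n}" for i
    using sub that unfolding submagic_def by blast
  have Pcol: "\<forall>i\<in>{1..n}. \<forall>k\<in>{1..n}. i \<noteq> k \<longrightarrow> P i j * P k j = 0" if "j \<in> {1..n}" for j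
    using sub that unfolding submagic_def by blast
  define r where "r i = 1 - (\<Sum>j=1..n. P i j)" for i
  define c where "c j = 1 - (\<Sum>i=1..n. P i j)" for j
  define S where "S = (\<Sum>i=1..n. \<Sum>j=1..n. P i j)"
  define q where "q = S - of_nat (n - 1)"
  have srow: "projection (\<Sum>j=1..n. P i j)" if "i \<in> {1..n}" for i
    using sum_proj[of "{1..n}" "P i"] Pp Prow that by auto
  have scol: "projection (\<Sum>i=1..n. P i j)" if "j \<in> {1..n}" for j
    using sum_proj[of "{1..n}" "\<lambda>i. P i j"] Pp Pcol that by auto
  have rp: "projection (r i)" if "i \<in> {1..n}" for i using proj_compl[OF srow[OF that]] by (simp add: r_def)
  have cp: "projection (c j)" if "j \<in> {1..n}" for j using proj_compl[OF scol[OF that]] by (simp add: c_def)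
  have Pr: "P i j * r i = 0 \<and> r i * P i j = 0" if "i \<in> {1..n}" "j \<in> {1..n}" for i j
  proof -
    have pp: "P i j * P i j = P i j" using Pp[OF that] by (simp add: projection_def)
    show ?thesis using orth_sum[of "{1..n}" j "P i", OF _ that(2) pp Prow[OF that(1)]]
      by (simp add: r_def algebra_simps)
  qed
  have Pc: "P i j * c j = 0 \<and> c j * P i j = 0" if "i \<in> {1..n}" "j \<in> {1..n}" for i j
  proof -
    have pp: "P i j * P i j = P i j" using Pp[OF that] by (simp add: projection_def)
    show ?thesis using orth_sum[of "{1..n}" i "\<lambda>i. P i j", OF _ that(1) pp Pcol[OF that(2)]]
      by (simp add: c_def algebra_simps)
  qed
  have sumr: "(\<Sum>i=1..n. r i) = of_nat n - S" by (simp add: r_def S_def sum_subtractf)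
  have Sw: "S = (\<Sum>j=1..n. \<Sum>i=1..n. P i j)" unfolding S_def by (rule sum.swap)
  have sumc: "(\<Sum>j=1..n. c j) = of_nat n - S" by (simp add: c_def Sw sum_subtractf)
  have onat: "(of_nat (n - 1) :: 'a) = of_nat n - 1" using n1 by (simp add: of_nat_diff)
  have qr: "q = 1 - (\<Sum>i=1..n. r i)" unfolding sumr q_def onat by (simp add: algebra_simps)
  have qc: "q = 1 - (\<Sum>j=1..n. c j)" unfolding sumc q_def onat by (simp add: algebra_simps)
  define C1 where "C1 = (\<exists>Q. magic N Q \<and> (\<forall>i\<in>{1..n}. \<forall>j\<in>{1..n}. Q i j = P i j))"
  define C2 where "C2 = ((\<forall>i\<in>{1..n}. projection (r i)) \<and> (\<forall>i\<in>{1..n}. \<forall>k\<in>{1..n}. i \<noteq> k \<longrightarrow> r i * r k = 0))"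
  define C3 where "C3 = ((\<forall>j\<in>{1..n}. projection (c j)) \<and> (\<forall>j\<in>{1..n}. \<forall>k\<in>{1..n}. j \<noteq> k \<longrightarrow> c j * c k = 0))"
  define C4 where "C4 = projection q"
  have pq_iff: "projection q \<longleftrightarrow> projection (1 - q)"
    using proj_compl[of q] proj_compl[of "1 - q"] by auto
  have C24: "C2 \<longleftrightarrow> C4"
  proof -
    have "C2 \<longleftrightarrow> projection (\<Sum>i=1..n. r i)" unfolding C2_def using orth_iff[of "{1..n}" r] rp by auto
    also have "(\<Sum>i=1..n. r i) = 1 - q" using qr by simp
    finally show ?thesis using pq_iff C4_def by simp
  qed
  have C34: "C3 \<longleftrightarrow> C4"
  proof -
    have "C3 \<longleftrightarrow> projection (\<Sum>j=1..n. c j)" unfolding C3_def using orth_iff[of "{1..n}" c] cp by auto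
    also have "(\<Sum>j=1..n. c j) = 1 - q" using qc by simp
    finally show ?thesis using pq_iff C4_def by simp
  qed
  have C12: "C1 \<Longrightarrow> C2"
  proof -
    assume "C1"
    then obtain Q where mQ: "magic N Q" and QP: "\<forall>i\<in>{1..n}. \<forall>j\<in>{1..n}. Q i j = P i j"
      unfolding C1_def by blast
    have QN: "Q i N = r i" if i: "i \<in> {1..n}" for i
    proof -
      have "(\<Sum>j=1..N. Q i j) = 1" using mQ i N unfolding magic_def by auto
      moreover have "(\<Sum>j=1..N. Q i j) = (\<Sum>j=1..n. P i j) + Q i N"
        using QP i N by simp
      ultimately show ?thesis by (simp add: r_def algebra_simps)
    qed
    have "r i * r k = 0" if "i \<in> {1..n}" "k \<in> {1..n}" "i \<noteq> k" for i k
    proof -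
      have "Q i N * Q k N = 0" using mQ that N unfolding magic_def submagic_def by auto
      then show ?thesis using QN that by simp
    qed
    then show C2 unfolding C2_def using rp by blast
  qed
  have C21: "C1" if c2: C2 and c3: C3
  proof -
    have qp: "projection q" using C24 c2 C4_def by simp
    have rr: "\<forall>i\<in>{1..n}. \<forall>k\<in>{1..n}. i \<noteq> k \<longrightarrow> r i * r k = 0" using c2 C2_def by blast
    have cc: "\<forall>i\<in>{1..n}. \<forall>k\<in>{1..n}. i \<noteq> k \<longrightarrow> c i * c k = 0" using c3 C3_def by blast
    have rq: "r i * q = 0 \<and> q * r i = 0" if i: "i \<in> {1..n}" for i
    proof -
      have ii: "r i * r i = r i" using rp[OF i] by (simp add: projection_def)
      show ?thesis using orth_sum[of "{1..n}" i r, OF _ i ii rr] unfolding qr by (simp add: algebra_simps)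
    qed
    have cq: "c i * q = 0 \<and> q * c i = 0" if i: "i \<in> {1..n}" for i
    proof -
      have ii: "c i * c i = c i" using cp[OF i] by (simp add: projection_def)
      show ?thesis using orth_sum[of "{1..n}" i c, OF _ i ii cc] unfolding qc by (simp add: algebra_simps)
    qed
    define Q where "Q i j = (if i \<le> n then (if j \<le> n then P i j else r i) else (if j \<le> n then c j else q))" for i j
    have QP: "\<forall>i\<in>{1..n}. \<forall>j\<in>{1..n}. Q i j = P i j" by (simp add: Q_def)
    have dom: "x \<in> {1..N} \<longleftrightarrow> x \<in> {1..n} \<or> x = N" for x using N n1 by auto
    have Pr1: "P i j * r i = 0" "r i * P i j = 0" if "1 \<le> i" "i \<le> n" "1 \<le> j" "j \<le> n" for i j
      using Pr[of i j] that by auto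
    have Pc1: "P i j * c j = 0" "c j * P i j = 0" if "1 \<le> i" "i \<le> n" "1 \<le> j" "j \<le> n" for i j
      using Pc[of i j] that by auto
    have rq1: "r i * q = 0" "q * r i = 0" if "1 \<le> i" "i \<le> n" for i using rq[of i] that by auto
    have cq1: "c i * q = 0" "q * c i = 0" if "1 \<le> i" "i \<le> n" for i using cq[of i] that by auto
    have rr1: "r i * r k = 0" if "1 \<le> i" "i \<le> n" "1 \<le> k" "k \<le> n" "i \<noteq> k" for i k
      using rr that by auto
    have cc1: "c i * c k = 0" if "1 \<le> i" "i \<le> n" "1 \<le> k" "k \<le> n" "i \<noteq> k" for i k
      using cc that by auto
    have PP1: "P i j * P i k = 0" if "1 \<le> i" "i \<le> n" "1 \<le> j" "j \<le> n" "1 \<le> k" "k \<le> n" "j \<noteq> k" for i j k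
      using Prow[of i] that by auto
    have PP2: "P i j * P k j = 0" if "1 \<le> i" "i \<le> n" "1 \<le> j" "j \<le> n" "1 \<le> k" "k \<le> n" "i \<noteq> k" for i j k
      using Pcol[of j] that by auto
    have big: "x \<in> {1..N} \<Longrightarrow> \<not> x \<le> n \<Longrightarrow> x = N" for x using N by auto
    have proj: "\<forall>i\<in>{1..N}. \<forall>j\<in>{1..N}. projection (Q i j)"
    proof (intro ballI)
      fix i j assume i: "i \<in> {1..N}" and j: "j \<in> {1..N}"
      show "projection (Q i j)"
        using Pp[of i j] rp[of i] cp[of j] qp i j by (cases "i \<le> n"; cases "j \<le> n") (auto simp: Q_def)
    qed
    have rowo: "\<forall>i\<in>{1..N}. \<forall>j\<in>{1..N}. \<forall>k\<in>{1..N}. j \<noteq> k \<longrightarrow> Q i j * Q i k = 0"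
    proof (intro ballI impI)
      fix i j k assume i: "i \<in> {1..N}" and j: "j \<in> {1..N}" and k: "k \<in> {1..N}" and jk: "j \<noteq> k"
      have i1: "1 \<le> i" and j1: "1 \<le> j" and k1: "1 \<le> k" using i j k by auto
      show "Q i j * Q i k = 0"
      proof (cases "i \<le> n")
        case True
        then show ?thesis
        proof (cases "j \<le> n"; cases "k \<le> n")
          assume "\<not> j \<le> n" "\<not> k \<le> n" then show ?thesis using big[OF j] big[OF k] jk by simp
        qed (use True i1 j1 k1 jk PP1 Pr1 in \<open>auto simp: Q_def\<close>)
      next
        case False
        then show ?thesis
        proof (cases "j \<le> n"; cases "k \<le> n")
          assume "\<not> j \<le> n" "\<not> k \<le> n" then show ?thesis using big[OF j] big[OF k] jk by simp
        qed (use False i1 j1 k1 jk cc1 cq1 in \<open>auto simp: Q_def\<close>)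
      qed
    qed
    have colo: "\<forall>j\<in>{1..N}. \<forall>i\<in>{1..N}. \<forall>k\<in>{1..N}. i \<noteq> k \<longrightarrow> Q i j * Q k j = 0"
    proof (intro ballI impI)
      fix i j k assume j: "j \<in> {1..N}" and i: "i \<in> {1..N}" and k: "k \<in> {1..N}" and ik: "i \<noteq> k"
      have i1: "1 \<le> i" and j1: "1 \<le> j" and k1: "1 \<le> k" using i j k by auto
      show "Q i j * Q k j = 0"
      proof (cases "j \<le> n")
        case True
        then show ?thesis
        proof (cases "i \<le> n"; cases "k \<le> n")
          assume "\<not> i \<le> n" "\<not> k \<le> n" then show ?thesis using big[OF i] big[OF k] ik by simp
        qed (use True i1 j1 k1 ik PP2 Pc1 in \<open>auto simp: Q_def\<close>)
      next
        case False
        then show ?thesis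
        proof (cases "i \<le> n"; cases "k \<le> n")
          assume "\<not> i \<le> n" "\<not> k \<le> n" then show ?thesis using big[OF i] big[OF k] ik by simp
        qed (use False i1 j1 k1 ik rr1 rq1 in \<open>auto simp: Q_def\<close>)
      qed
    qed
    have rows: "\<forall>i\<in>{1..N}. (\<Sum>j=1..N. Q i j) = 1"
    proof
      fix i assume i: "i \<in> {1..N}"
      have "(\<Sum>j=1..N. Q i j) = (\<Sum>j=1..n. Q i j) + Q i N" using N by simp
      also have "(\<Sum>j=1..n. Q i j) = (if i \<le> n then (\<Sum>j=1..n. P i j) else (\<Sum>j=1..n. c j))"
        by (simp add: Q_def)
      finally show "(\<Sum>j=1..N. Q i j) = 1" using N qc by (simp add: Q_def r_def)
    qed
    have cols: "\<forall>j\<in>{1..N}. (\<Sum>i=1..N. Q i j) = 1"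
    proof
      fix j assume j: "j \<in> {1..N}"
      have "(\<Sum>i=1..N. Q i j) = (\<Sum>i=1..n. Q i j) + Q N j" using N by simp
      also have "(\<Sum>i=1..n. Q i j) = (if j \<le> n then (\<Sum>i=1..n. P i j) else (\<Sum>i=1..n. r i))"
        by (simp add: Q_def)
      finally show "(\<Sum>i=1..N. Q i j) = 1" using N qr by (simp add: Q_def c_def)
    qed
    have "magic N Q" unfolding magic_def submagic_def using proj rowo colo rows cols by blast
    then show C1 unfolding C1_def using QP by blast
  qed
  have goal: "(C1 \<longleftrightarrow> C2) \<and> (C1 \<longleftrightarrow> C3) \<and> (C1 \<longleftrightarrow> C4)"
    using C12 C21 C24 C34 by blast
  show ?thesis
    unfolding Let_def Nn using goal unfolding C1_def C2_def C3_def C4_def r_def c_def q_def S_def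
    by assumption
qed

end
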